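(* Let $\mu$ be a probability measure on $\mathbb{R}$ satisfying the standing assumptions below and $\int_{\mathbb{R}}|x|\,d\mu<+\infty$. Let $\vec X_n=(X_1,\dots,X_n)$ be i.i.d. random variables with law $\mu$. Then, for every $k\in\mathbb{N}$, $\mathbb{E}[SC_{opt}(\vec X_n)]\to W_1(\mu,\nu^{(k)})$ as $n\to\infty$, where $\nu^{(k)}$ is a solution to $\min_{\lambda\in\mathcal{P}_k(\mathbb{R})}W_1(\mu,\lambda)$. In particular, $\mathbb{E}[SC_{opt}(\vec X_n)]>0$ for $n$ large enough.
   Context: For $\vec x\in\mathbb{R}^n$ and facility locations $\vec y\in\mathbb{R}^k$, $SC(\vec x,\vec y)=\frac1n\sum_{i=1}^n\min_{j\in[k]}|x_i-y_j|$ and $SC_{opt}(\vec x)=\min_{\vec y\in\mathbb{R}^k}SC(\vec x,\vec y)$. $\mathcal{P}_k(\mathbb{R})$ is the set of probability measures $\sum_{j=1}^k\nu_j\delta_{x_j}$ with $x_j\in\mathbb{R}$, $\nu_j\ge0$, $\sum_j\nu_j=1$. $W_1(\alpha,\beta)=\min_{\pi\in\Pi(\alpha,\beta)}\int|x-y|\,d\pi$ (the 1-Wasserstein distance; $\Pi(\alpha,\beta)$ the couplings). Standing assumptions on $\mu$: $\mu$ is absolutely continuous with density $\rho_\mu$; its support is an interval (bounded or not) on whose interior $\rho_\mu$ is strictly positive; $\rho_\mu$ is differentiable on the support of $\mu$. *)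

theory Defs
  imports "HOL-Probability.Probability"
begin

definition SC :: "nat \<Rightarrow> (nat \<Rightarrow> real) \<Rightarrow> nat \<Rightarrow> (nat \<Rightarrow> real) \<Rightarrow> real" where
  "SC n x k y = (1 / real n) * (\<Sum>i<n. Min ((\<lambda>j. \<bar>x i - y j\<bar>) ` {..<k}))"

text \<open>Optimal social cost: minimum (infimum, attained) over all y in R^k.\<close>
definition SC_opt :: "nat \<Rightarrow> (nat \<Rightarrow> real) \<Rightarrow> nat \<Rightarrow> real" where
  "SC_opt n x k = (INF y \<in> {y. \<forall>j\<ge>k. y j = 0}. SC n x k y)"

definition Pk :: "nat \<Rightarrow> real measure set" where
  "Pk k = {m. \<exists>(p :: nat \<Rightarrow> real) (w :: nat \<Rightarrow> real).
      (\<forall>j<k. w j \<ge> 0) \<and> (\<Sum>j<k. w j) = 1 \<and> sets m = sets borel \<and>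
      (\<forall>A \<in> sets borel. emeasure m A = (\<Sum>j<k. ennreal (w j) * indicator A (p j)))}"

definition couplings :: "real measure \<Rightarrow> real measure \<Rightarrow> (real \<times> real) measure set" where
  "couplings \<alpha> \<beta> = {\<pi>. sets \<pi> = sets (borel \<Otimes>\<^sub>M borel) \<and>
      distr \<pi> borel fst = \<alpha> \<and> distr \<pi> borel snd = \<beta>}"

definition W1 :: "real measure \<Rightarrow> real measure \<Rightarrow> ennreal" where
  "W1 \<alpha> \<beta> = (INF \<pi> \<in> couplings \<alpha> \<beta>. \<integral>\<^sup>+ z. ennreal \<bar>fst z - snd z\<bar> \<partial>\<pi>)"

end

theory Submission
  imports Defs
begin
definition fmin :: "nat \<Rightarrow> (nat \<Rightarrow> real) \<Rightarrow> real \<Rightarrow> real" where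
  "fmin k y z = Min ((\<lambda>j. \<bar>z - y j\<bar>) ` {..<k})"

lemma fmin_le: "j < k \<Longrightarrow> fmin k y z \<le> \<bar>z - y j\<bar>"
  unfolding fmin_def by (intro Min_le) auto

lemma fmin_attained: "k \<ge> 1 \<Longrightarrow> \<exists>j<k. fmin k y z = \<bar>z - y j\<bar>"
proof -
  assume "k \<ge> 1"
  then have "0 \<in> {..<k}" by auto
  then have "fmin k y z \<in> (\<lambda>j. \<bar>z - y j\<bar>) ` {..<k}"
    unfolding fmin_def by (intro Min_in) blast+
  then show ?thesis by auto
qed

lemma fmin_nonneg: "k \<ge> 1 \<Longrightarrow> fmin k y z \<ge> 0"
  using fmin_attained[of k y z] by force

lemma fmin_mono_pt:
  assumes "k \<ge> 1" "\<And>j. j < k \<Longrightarrow> \<bar>b - y' j\<bar> \<le> \<bar>a - y j\<bar>"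
  shows "fmin k y' b \<le> fmin k y a"
proof -
  obtain j where j: "j < k" "fmin k y a = \<bar>a - y j\<bar>" using fmin_attained[OF assms(1)] by blast
  have "fmin k y' b \<le> \<bar>b - y' j\<bar>" using fmin_le[OF j(1)] .
  also have "\<dots> \<le> \<bar>a - y j\<bar>" using assms(2)[OF j(1)] .
  finally show ?thesis using j by simp
qed

lemma fmin_lip:
  assumes "k \<ge> 1" "\<And>j. j < k \<Longrightarrow> \<bar>y j - y' j\<bar> \<le> e"
  shows "\<bar>fmin k y z - fmin k y' z'\<bar> \<le> \<bar>z - z'\<bar> + e"
proof -
  have 1: "fmin k y z \<le> fmin k y' z' + (\<bar>z - z'\<bar> + e)"
  proof -
    obtain j where j: "j < k" "fmin k y' z' = \<bar>z' - y' j\<bar>" using fmin_attained[OF assms(1)] by blast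
    have "fmin k y z \<le> \<bar>z - y j\<bar>" using fmin_le[OF j(1)] .
    also have "\<dots> \<le> \<bar>z' - y' j\<bar> + (\<bar>z - z'\<bar> + e)" using assms(2)[OF j(1)] by linarith
    finally show ?thesis using j by simp
  qed
  have 2: "fmin k y' z' \<le> fmin k y z + (\<bar>z - z'\<bar> + e)"
  proof -
    obtain j where j: "j < k" "fmin k y z = \<bar>z - y j\<bar>" using fmin_attained[OF assms(1)] by blast
    have "fmin k y' z' \<le> \<bar>z' - y' j\<bar>" using fmin_le[OF j(1)] .
    also have "\<dots> \<le> \<bar>z - y j\<bar> + (\<bar>z - z'\<bar> + e)" using assms(2)[OF j(1)] by linarith
    finally show ?thesis using j by simp
  qed
  from 1 2 show ?thesis by linarith
qed

lemma fmin_cong: "(\<And>j. j < k \<Longrightarrow> y j = y' j) \<Longrightarrow> fmin k y z = fmin k y' z"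
  unfolding fmin_def by (intro arg_cong[where f=Min] image_cong) auto

lemma fmin_meas[measurable]: "(\<lambda>z. fmin k y (f z)) \<in> borel_measurable M" if [measurable]: "f \<in> borel_measurable M"
  unfolding fmin_def by measurable

lemma fmin_le_abs: "k \<ge> 1 \<Longrightarrow> fmin k y z \<le> \<bar>z\<bar> + \<bar>y 0\<bar>"
  using fmin_le[of 0 k y z] by linarith

lemma SC_fmin: "SC n x k y = (1 / real n) * (\<Sum>i<n. fmin k y (x i))"
  unfolding SC_def fmin_def ..

definition clamp :: "real \<Rightarrow> real \<Rightarrow> real" where
  "clamp R t = max (- R) (min R t)"

lemma clamp_lip: "R \<ge> 0 \<Longrightarrow> \<bar>clamp R a - clamp R b\<bar> \<le> \<bar>a - b\<bar>"
  unfolding clamp_def by (auto simp: abs_if max_def min_def)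

lemma clamp_bound: "R \<ge> 0 \<Longrightarrow> \<bar>clamp R a\<bar> \<le> R"
  unfolding clamp_def by (auto simp: abs_if max_def min_def)

lemma clamp_meas[measurable]: "(\<lambda>z. clamp R (f z)) \<in> borel_measurable M" if [measurable]: "f \<in> borel_measurable M"
  unfolding clamp_def by measurable

fun idx :: "(nat \<Rightarrow> real) \<Rightarrow> nat \<Rightarrow> real \<Rightarrow> nat" where
  "idx y 0 x = 0"
| "idx y (Suc m) x = (if \<bar>x - y (Suc m)\<bar> < \<bar>x - y (idx y m x)\<bar> then Suc m else idx y m x)"

lemma idx_props: "idx y m x \<le> m \<and> (\<forall>j\<le>m. \<bar>x - y (idx y m x)\<bar> \<le> \<bar>x - y j\<bar>)"
proof (induction m)
  case 0 then show ?case by simp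
next
  case (Suc m)
  then show ?case by (auto simp: le_Suc_eq)
qed

lemma idx_meas[measurable]: "idx y m \<in> measurable borel (count_space UNIV)"
proof (induction m)
  case 0 then show ?case by simp
next
  case (Suc m)
  have [measurable]: "(\<lambda>x. y (idx y m x)) \<in> borel_measurable borel"
    using measurable_compose[OF Suc, of y borel] by (simp add: comp_def)
  have "{x \<in> space borel. \<bar>x - y (Suc m)\<bar> < \<bar>x - y (idx y m x)\<bar>} \<in> sets borel" by measurable
  then show ?case using Suc by (simp only: idx.simps) (rule measurable_If[OF measurable_const]; simp)
qed

lemma W1_upper:
  assumes prob: "prob_space \<mu>" and sets: "sets \<mu> = sets borel" and k: "k \<ge> 1"
    and int: "integrable \<mu> (\<lambda>x. fmin k y x)"
  shows "\<exists>\<nu>\<in>Pk k. W1 \<mu> \<nu> \<le> ennreal (\<integral>x. fmin k y x \<partial>\<mu>)"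
proof -
  interpret prob_space \<mu> by fact
  have sp: "space \<mu> = UNIV" using sets_eq_imp_space_eq[OF sets] by simp
  define ix where "ix x = idx y (k - 1) x" for x
  define T where "T x = y (ix x)" for x
  have ix_lt: "ix x < k" for x using idx_props[of y "k-1" x] k unfolding ix_def by linarith
  have T_eq: "\<bar>x - T x\<bar> = fmin k y x" for x
  proof -
    obtain j where j: "j < k" "fmin k y x = \<bar>x - y j\<bar>" using fmin_attained[OF k] by blast
    have "\<bar>x - T x\<bar> \<le> \<bar>x - y j\<bar>" using idx_props[of y "k-1" x] j(1) unfolding T_def ix_def by auto
    moreover have "fmin k y x \<le> \<bar>x - T x\<bar>" unfolding T_def using fmin_le[OF ix_lt] .
    ultimately show ?thesis using j by simp
  qed
  have ix_meas[measurable]: "ix \<in> measurable borel (count_space UNIV)" unfolding ix_def by simp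
  have T_meas[measurable]: "T \<in> borel_measurable borel"
    unfolding T_def using measurable_compose[OF ix_meas, of y borel] by (simp add: comp_def)
  have T_meas': "T \<in> measurable \<mu> borel" using measurable_cong_sets[OF sets refl] T_meas by blast
  have ixs: "ix -` {j} \<in> sets \<mu>" for j
    using measurable_sets[OF ix_meas, of "{j}"] sets by simp
  define \<nu> where "\<nu> = distr \<mu> borel T"
  define w where "w j = measure \<mu> (ix -` {j})" for j
  have em: "emeasure \<nu> A = (\<Sum>j<k. ennreal (w j) * indicator A (y j))" if A: "A \<in> sets borel" for A
  proof -
    have "emeasure \<nu> A = emeasure \<mu> (T -` A)"
      unfolding \<nu>_def using emeasure_distr[OF T_meas' A] sp by simp
    also have "T -` A = (\<Union>j\<in>{j\<in>{..<k}. y j \<in> A}. ix -` {j})"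
      using ix_lt unfolding T_def by auto
    also have "emeasure \<mu> \<dots> = (\<Sum>j\<in>{j\<in>{..<k}. y j \<in> A}. emeasure \<mu> (ix -` {j}))"
      by (rule sum_emeasure[symmetric]) (auto simp: ixs disjoint_family_on_def)
    also have "\<dots> = (\<Sum>j\<in>{j\<in>{..<k}. y j \<in> A}. ennreal (w j))"
      by (intro sum.cong refl) (simp only: w_def emeasure_eq_measure)
    also have "\<dots> = (\<Sum>j<k. if y j \<in> A then ennreal (w j) else 0)"
      by (rule sum.inter_filter) simp
    also have "\<dots> = (\<Sum>j<k. ennreal (w j) * indicator A (y j))"
      by (intro sum.cong refl) (simp add: indicator_def)
    finally show ?thesis .
  qed
  have "prob_space \<nu>" unfolding \<nu>_def by (rule prob_space_distr[OF T_meas'])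
  then have e1: "emeasure \<nu> (space \<nu>) = 1" by (rule prob_space.emeasure_space_1)
  have spn: "space \<nu> = UNIV" unfolding \<nu>_def by simp
  have wnn: "\<And>j. w j \<ge> 0" unfolding w_def by (rule measure_nonneg)
  have "emeasure \<nu> UNIV = (\<Sum>j<k. ennreal (w j))" using em[of UNIV] by simp
  also have "\<dots> = ennreal (\<Sum>j<k. w j)" using wnn by (rule sum_ennreal)
  finally have "ennreal (\<Sum>j<k. w j) = 1" using e1 spn by simp
  then have wsum: "(\<Sum>j<k. w j) = 1"
    using wnn by (simp add: sum_nonneg)
  have nuP: "\<nu> \<in> Pk k"
  proof -
    have "\<forall>j<k. w j \<ge> 0" using wnn by blast
    moreover have "sets \<nu> = sets borel" by (simp add: \<nu>_def)
    ultimately show ?thesis unfolding Pk_def mem_Collect_eq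
      by (intro exI[of _ y] exI[of _ w] conjI) (use wsum em in simp_all)
  qed
  define \<pi> where "\<pi> = distr \<mu> (borel \<Otimes>\<^sub>M borel) (\<lambda>x. (x, T x))"
  have pm: "(\<lambda>x. (x, T x)) \<in> measurable \<mu> (borel \<Otimes>\<^sub>M borel)"
    by (rule measurable_Pair[OF measurable_ident_sets[OF sets] T_meas'])
  have "distr \<pi> borel fst = distr \<mu> borel (fst \<circ> (\<lambda>x. (x, T x)))"
    unfolding \<pi>_def by (rule distr_distr[OF _ pm]) simp
  also have "\<dots> = \<mu>" using distr_id2[OF sets[symmetric]] by (simp add: comp_def)
  finally have d1: "distr \<pi> borel fst = \<mu>" .
  have "distr \<pi> borel snd = distr \<mu> borel (snd \<circ> (\<lambda>x. (x, T x)))"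
    unfolding \<pi>_def by (rule distr_distr[OF _ pm]) simp
  also have "\<dots> = \<nu>" by (simp add: comp_def \<nu>_def)
  finally have d2: "distr \<pi> borel snd = \<nu>" .
  have piC: "\<pi> \<in> couplings \<mu> \<nu>" unfolding couplings_def using d1 d2 by (simp add: \<pi>_def)
  have "W1 \<mu> \<nu> \<le> (\<integral>\<^sup>+ z. ennreal \<bar>fst z - snd z\<bar> \<partial>\<pi>)"
    unfolding W1_def using piC by (rule INF_lower)
  also have "\<dots> = (\<integral>\<^sup>+ x. ennreal \<bar>x - T x\<bar> \<partial>\<mu>)"
    unfolding \<pi>_def by (subst nn_integral_distr[OF pm]) auto
  also have "\<dots> = (\<integral>\<^sup>+ x. ennreal (fmin k y x) \<partial>\<mu>)" by (simp add: T_eq)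
  also have "\<dots> = ennreal (\<integral>x. fmin k y x \<partial>\<mu>)"
    by (rule nn_integral_eq_integral[OF int]) (simp add: fmin_nonneg[OF k])
  finally show ?thesis using nuP by blast
qed

lemma W1_lower:
  assumes sets: "sets \<mu> = sets borel" and k: "k \<ge> 1"
    and int: "\<And>y. integrable \<mu> (\<lambda>x. fmin k y x)" and nu: "\<nu> \<in> Pk k"
  shows "\<exists>p. ennreal (\<integral>x. fmin k p x \<partial>\<mu>) \<le> W1 \<mu> \<nu>"
proof -
  obtain p w where w: "\<forall>j<k. w j \<ge> 0" and nsets: "sets \<nu> = sets borel"
    and em: "\<forall>A \<in> sets borel. emeasure \<nu> A = (\<Sum>j<k. ennreal (w j) * indicator A (p j))"
    using nu unfolding Pk_def by blast
  define S where "S = p ` {..<k}"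
  have Sb0: "S \<in> sets borel" unfolding S_def by (intro borel_closed finite_imp_closed) auto
  have Sb: "UNIV - S \<in> sets borel" using borel_comp[OF Sb0] by (simp add: Compl_eq_Diff_UNIV)
  have nuS: "emeasure \<nu> (UNIV - S) = 0"
    using em Sb by (auto simp: S_def indicator_def intro!: sum.neutral)
  have "ennreal (\<integral>x. fmin k p x \<partial>\<mu>) \<le> (\<integral>\<^sup>+ z. ennreal \<bar>fst z - snd z\<bar> \<partial>\<pi>)"
    if pi: "\<pi> \<in> couplings \<mu> \<nu>" for \<pi>
  proof -
    have ps: "sets \<pi> = sets (borel \<Otimes>\<^sub>M borel)" and d1: "distr \<pi> borel fst = \<mu>"
      and d2: "distr \<pi> borel snd = \<nu>" using pi unfolding couplings_def by auto
    have fm[measurable]: "fst \<in> measurable \<pi> borel" unfolding measurable_cong_sets[OF ps refl] by (rule measurable_fst)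
    have sm[measurable]: "snd \<in> measurable \<pi> borel" unfolding measurable_cong_sets[OF ps refl] by (rule measurable_snd)
    have "emeasure \<pi> (snd -` (UNIV - S) \<inter> space \<pi>) = 0"
      using emeasure_distr[OF sm Sb] d2 nuS by simp
    moreover have "snd -` (UNIV - S) \<inter> space \<pi> \<in> sets \<pi>" using measurable_sets[OF sm Sb] .
    ultimately have ae: "AE z in \<pi>. snd z \<in> S"
      by (subst AE_iff_measurable[where N="snd -` (UNIV - S) \<inter> space \<pi>"]) auto
    have "(\<integral>\<^sup>+ z. ennreal (fmin k p (fst z)) \<partial>\<pi>) \<le> (\<integral>\<^sup>+ z. ennreal \<bar>fst z - snd z\<bar> \<partial>\<pi>)"
      using ae by (intro nn_integral_mono_AE) (auto simp: S_def intro!: ennreal_leI fmin_le elim!: eventually_mono)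
    moreover have "(\<integral>\<^sup>+ z. ennreal (fmin k p (fst z)) \<partial>\<pi>) = (\<integral>\<^sup>+ x. ennreal (fmin k p x) \<partial>\<mu>)"
    proof -
      have "(\<lambda>x. ennreal (fmin k p x)) \<in> borel_measurable (distr \<pi> borel fst)"
        by (subst measurable_cong_sets[OF sets_distr refl]) measurable
      from nn_integral_distr[OF fm this] show ?thesis using d1 by simp
    qed
    moreover have "(\<integral>\<^sup>+ x. ennreal (fmin k p x) \<partial>\<mu>) = ennreal (\<integral>x. fmin k p x \<partial>\<mu>)"
      by (rule nn_integral_eq_integral[OF int]) (simp add: fmin_nonneg[OF k])
    ultimately show ?thesis by simp
  qed
  then show ?thesis unfolding W1_def by (blast intro: INF_greatest)
qed

lemma monoseq_subseq: "monoseq u \<Longrightarrow> strict_mono f \<Longrightarrow> monoseq (\<lambda>n. u (f n))"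
  unfolding monoseq_def using strict_mono_less_eq by metis

lemma multi_monosub:
  fixes s :: "nat \<Rightarrow> nat \<Rightarrow> real"
  shows "\<exists>r. strict_mono r \<and> (\<forall>j<k. monoseq (\<lambda>n. s (r n) j))"
proof (induction k)
  case 0 show ?case by (auto intro!: exI[of _ id] simp: strict_mono_def)
next
  case (Suc k)
  then obtain r where r: "strict_mono r" "\<forall>j<k. monoseq (\<lambda>n. s (r n) j)" by blast
  obtain f where f: "strict_mono f" "monoseq (\<lambda>n. s (r (f n)) k)"
    using seq_monosub[of "\<lambda>n. s (r n) k"] by blast
  have "strict_mono (r \<circ> f)" using r(1) f(1) by (rule strict_mono_o)
  moreover have "\<forall>j<Suc k. monoseq (\<lambda>n. s ((r \<circ> f) n) j)"
  proof (intro allI impI)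
    fix j assume "j < Suc k"
    then consider "j < k" | "j = k" by linarith
    then show "monoseq (\<lambda>n. s ((r \<circ> f) n) j)"
    proof cases
      case 1 then show ?thesis using monoseq_subseq[OF _ f(1), of "\<lambda>n. s (r n) j"] r(2) by simp
    next
      case 2 then show ?thesis using f(2) by simp
    qed
  qed
  ultimately show ?case by blast
qed

lemma mono_dich:
  fixes u :: "nat \<Rightarrow> real"
  assumes "monoseq u"
  shows "convergent u \<or> (\<forall>C. eventually (\<lambda>n. C \<le> \<bar>u n\<bar>) sequentially)"
proof (cases "Bseq u")
  case True then show ?thesis using Bseq_monoseq_convergent assms by blast
next
  case False
  have "eventually (\<lambda>n. C \<le> \<bar>u n\<bar>) sequentially" for C
  proof -
    have "\<exists>N. \<bar>C\<bar> + \<bar>u 0\<bar> + 1 < \<bar>u N\<bar>"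
    proof (rule ccontr)
      assume "\<not> ?thesis"
      then have "\<forall>n. norm (u n) \<le> \<bar>C\<bar> + \<bar>u 0\<bar> + 1" by (auto simp: not_less)
      then have "Bseq u" by (intro BseqI') blast
      with False show False by simp
    qed
    then obtain N where N: "\<bar>C\<bar> + \<bar>u 0\<bar> + 1 < \<bar>u N\<bar>" by blast
    from assms consider "\<forall>m n. m \<le> n \<longrightarrow> u m \<le> u n" | "\<forall>m n. m \<le> n \<longrightarrow> u n \<le> u m"
      unfolding monoseq_def by blast
    then show ?thesis
    proof cases
      case 1
      then have "u 0 \<le> u N" by simp
      then have "C \<le> u N" using N by linarith
      then show ?thesis using 1 unfolding eventually_sequentially
        by (intro exI[of _ N] allI impI) (metis abs_ge_self order_trans)
    next
      case 2
      then have "u N \<le> u 0" by simp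
      then have "u N \<le> - C" using N by linarith
      then show ?thesis using 2 unfolding eventually_sequentially
        by (intro exI[of _ N] allI impI) (smt (verit))
    qed
  qed
  then show ?thesis by blast
qed

lemma fmin_gt:
  assumes "k \<ge> 1" "\<And>j. j < k \<Longrightarrow> b < \<bar>x - y j\<bar>"
  shows "b < fmin k y x"
  using fmin_attained[OF assms(1), of y x] assms(2) by force

lemma minimizer:
  assumes prob: "prob_space \<mu>" and sets: "sets \<mu> = sets borel" and k: "k \<ge> 1"
    and int: "\<And>y. integrable \<mu> (\<lambda>x. fmin k y x)"
  shows "\<exists>y. \<forall>y'. (\<integral>x. fmin k y x \<partial>\<mu>) \<le> (\<integral>x. fmin k y' x \<partial>\<mu>)"
proof -
  interpret prob_space \<mu> by fact
  define F where "F y = (\<integral>x. fmin k y x \<partial>\<mu>)" for y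
  define V where "V = Inf (range F)"
  have F0: "F y \<ge> 0" for y unfolding F_def by (intro integral_nonneg_AE) (simp add: fmin_nonneg[OF k])
  have bdd: "bdd_below (range F)" using F0 by (intro bdd_belowI[of _ 0]) auto
  have V0: "V \<ge> 0" unfolding V_def using F0 by (intro cINF_greatest) auto
  have VF: "V \<le> F y" for y unfolding V_def using bdd by (rule cINF_lower) simp
  have "\<exists>y. F y < V + inverse (real (Suc n))" for n
  proof -
    have "Inf (range F) < V + inverse (real (Suc n))" unfolding V_def by simp
    from cInf_lessD[OF _ this] show ?thesis by auto
  qed
  then obtain ys where ys: "\<And>n. F (ys n) < V + inverse (real (Suc n))" by metis
  have ysl: "(\<lambda>n. F (ys n)) \<longlonglongrightarrow> V"
  proof (rule tendsto_sandwich[of "\<lambda>_. V" _ _ "\<lambda>n. V + inverse (real (Suc n))"])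
    show "\<forall>\<^sub>F n in sequentially. V \<le> F (ys n)" using VF by simp
    show "\<forall>\<^sub>F n in sequentially. F (ys n) \<le> V + inverse (real (Suc n))" by (rule always_eventually) (use ys less_imp_le in blast)
    show "(\<lambda>n. V + inverse (real (Suc n))) \<longlonglongrightarrow> V"
      using tendsto_add[OF tendsto_const LIMSEQ_inverse_real_of_nat, of V] by simp
  qed simp
  obtain r where r: "strict_mono r" "\<forall>j<k. monoseq (\<lambda>n. ys (r n) j)"
    using multi_monosub[of k ys] by blast
  define s where "s n = ys (r n)" for n
  have sl: "(\<lambda>n. F (s n)) \<longlonglongrightarrow> V"
    using LIMSEQ_subseq_LIMSEQ[OF ysl r(1)] by (simp add: s_def comp_def)
  have dich: "convergent (\<lambda>n. s n j) \<or> (\<forall>C. eventually (\<lambda>n. C \<le> \<bar>s n j\<bar>) sequentially)" if "j < k" for j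
    using mono_dich[of "\<lambda>n. s n j"] r(2) that by (simp add: s_def)
  define J where "J = {j. j < k \<and> convergent (\<lambda>n. s n j)}"
  have nnF: "(\<integral>\<^sup>+ x. ennreal (fmin k y x) \<partial>\<mu>) = ennreal (F y)" for y
    unfolding F_def by (rule nn_integral_eq_integral[OF int]) (simp add: fmin_nonneg[OF k])
  have mf: "(\<lambda>x. ennreal (fmin k y x)) \<in> borel_measurable \<mu>" for y
    by (subst measurable_cong_sets[OF sets refl]) measurable
  have "(\<integral>\<^sup>+ x. liminf (\<lambda>n. ennreal (fmin k (s n) x)) \<partial>\<mu>) \<le> liminf (\<lambda>n. \<integral>\<^sup>+ x. ennreal (fmin k (s n) x) \<partial>\<mu>)"
    by (rule nn_integral_liminf) (rule mf)
  also have "liminf (\<lambda>n. \<integral>\<^sup>+ x. ennreal (fmin k (s n) x) \<partial>\<mu>) = ennreal V"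
    unfolding nnF by (rule lim_imp_Liminf) (use sl in auto)
  finally have fatou: "(\<integral>\<^sup>+ x. liminf (\<lambda>n. ennreal (fmin k (s n) x)) \<partial>\<mu>) \<le> ennreal V" .
  show ?thesis
  proof (cases "J = {}")
    case True
    have inf: "liminf (\<lambda>n. ennreal (fmin k (s n) x)) = \<infinity>" for x
    proof -
      have "\<infinity> \<le> liminf (\<lambda>n. ennreal (fmin k (s n) x))"
        unfolding le_Liminf_iff
      proof (intro allI impI)
        fix t :: ennreal assume t: "t < \<infinity>"
        define b where "b = enn2real t"
        have tb: "t = ennreal b" using t unfolding b_def by simp
        have "\<forall>j\<in>{..<k}. eventually (\<lambda>n. \<bar>x\<bar> + b + 1 \<le> \<bar>s n j\<bar>) sequentially"
          using dich True unfolding J_def by auto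
        then have "eventually (\<lambda>n. \<forall>j\<in>{..<k}. \<bar>x\<bar> + b + 1 \<le> \<bar>s n j\<bar>) sequentially"
          by (rule eventually_ball_finite[rotated]) simp
        then show "eventually (\<lambda>n. t < ennreal (fmin k (s n) x)) sequentially"
        proof (rule eventually_mono)
          fix n assume A: "\<forall>j\<in>{..<k}. \<bar>x\<bar> + b + 1 \<le> \<bar>s n j\<bar>"
          have "b < fmin k (s n) x"
          proof (rule fmin_gt[OF k])
            fix j assume "j < k"
            then have "\<bar>x\<bar> + b + 1 \<le> \<bar>s n j\<bar>" using A by auto
            then show "b < \<bar>x - s n j\<bar>" by linarith
          qed
          then show "t < ennreal (fmin k (s n) x)" unfolding tb
            by (subst ennreal_less_iff) (auto simp: b_def)
        qed
      qed
      then show ?thesis by (simp add: top_unique)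
    qed
    have "(\<integral>\<^sup>+ x. liminf (\<lambda>n. ennreal (fmin k (s n) x)) \<partial>\<mu>) = \<infinity>"
      unfolding inf by (simp add: emeasure_space_1)
    with fatou have "\<top> \<le> ennreal V" by simp
    then show ?thesis by (simp add: top_unique)
  next
    case False
    then obtain j0 where j0: "j0 \<in> J" by blast
    define L where "L j = lim (\<lambda>n. s n j)" for j
    define y' where "y' j = (if j \<in> J then L j else L j0)" for j
    have Lc: "(\<lambda>n. s n j) \<longlonglongrightarrow> L j" if "j \<in> J" for j
      using that unfolding J_def L_def by (simp add: convergent_LIMSEQ_iff)
    have pt: "ennreal (fmin k y' x) \<le> liminf (\<lambda>n. ennreal (fmin k (s n) x))" for x
      unfolding le_Liminf_iff
    proof (intro allI impI)
      fix t assume t: "t < ennreal (fmin k y' x)"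
      define b where "b = enn2real t"
      have tt: "t < \<infinity>" using less_trans[OF t ennreal_less_top] by simp
      have tb: "t = ennreal b" using tt unfolding b_def by simp
      have b0: "b \<ge> 0" unfolding b_def by simp
      have "ennreal b < ennreal (fmin k y' x)" using t tb by simp
      then have bl: "b < fmin k y' x" using ennreal_less_iff[OF b0] by simp
      have "\<forall>j\<in>{..<k}. eventually (\<lambda>n. b < \<bar>x - s n j\<bar>) sequentially"
      proof
        fix j assume j: "j \<in> {..<k}"
        show "eventually (\<lambda>n. b < \<bar>x - s n j\<bar>) sequentially"
        proof (cases "j \<in> J")
          case True
          have "(\<lambda>n. \<bar>x - s n j\<bar>) \<longlonglongrightarrow> \<bar>x - L j\<bar>" by (rule tendsto_rabs[OF tendsto_diff[OF tendsto_const Lc[OF True]]])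
          moreover have "b < \<bar>x - L j\<bar>"
          proof -
            have "fmin k y' x \<le> \<bar>x - y' j\<bar>" by (rule fmin_le) (use j in simp)
            moreover have "y' j = L j" by (simp add: y'_def True)
            ultimately show ?thesis using bl by linarith
          qed
          ultimately show ?thesis by (rule order_tendstoD)
        next
          case False
          then have "\<not> convergent (\<lambda>n. s n j)" using j unfolding J_def by simp
          then have "\<forall>C. eventually (\<lambda>n. C \<le> \<bar>s n j\<bar>) sequentially" using dich[of j] j by simp
          then have "eventually (\<lambda>n. \<bar>x\<bar> + b + 1 \<le> \<bar>s n j\<bar>) sequentially" by blast
          then show ?thesis by (rule eventually_mono) linarith
        qed
      qed
      then have "eventually (\<lambda>n. \<forall>j\<in>{..<k}. b < \<bar>x - s n j\<bar>) sequentially"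
        by (rule eventually_ball_finite[rotated]) simp
      then show "eventually (\<lambda>n. t < ennreal (fmin k (s n) x)) sequentially"
      proof (rule eventually_mono)
        fix n assume "\<forall>j\<in>{..<k}. b < \<bar>x - s n j\<bar>"
        then have "b < fmin k (s n) x" by (intro fmin_gt[OF k]) simp
        then show "t < ennreal (fmin k (s n) x)" unfolding tb
          by (subst ennreal_less_iff[OF b0]) auto
      qed
    qed
    have "ennreal (F y') = (\<integral>\<^sup>+ x. ennreal (fmin k y' x) \<partial>\<mu>)" by (simp add: nnF)
    also have "\<dots> \<le> (\<integral>\<^sup>+ x. liminf (\<lambda>n. ennreal (fmin k (s n) x)) \<partial>\<mu>)"
      by (rule nn_integral_mono) (rule pt)
    also have "\<dots> \<le> ennreal V" by (rule fatou)
    finally have "F y' \<le> V" by (simp only: ennreal_le_iff[OF V0])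
    then have "\<forall>y''. F y' \<le> F y''" using VF by (smt (verit))
    then show ?thesis unfolding F_def by blast
  qed
qed

lemma F_pos:
  assumes prob: "prob_space \<mu>" and dens: "\<mu> = density lborel (\<lambda>x. ennreal (\<rho> x))"
    and rho_meas: "\<rho> \<in> borel_measurable borel" and k: "k \<ge> 1"
    and int: "integrable \<mu> (\<lambda>x. fmin k y x)"
  shows "(\<integral>x. fmin k y x \<partial>\<mu>) > 0"
proof (rule ccontr)
  interpret prob_space \<mu> by fact
  assume "\<not> ?thesis"
  moreover have "(\<integral>x. fmin k y x \<partial>\<mu>) \<ge> 0" by (intro integral_nonneg_AE) (simp add: fmin_nonneg[OF k])
  ultimately have "(\<integral>x. fmin k y x \<partial>\<mu>) = 0" by simp
  then have ae: "AE x in \<mu>. fmin k y x = 0"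
    using integral_nonneg_eq_0_iff_AE[OF int] by (simp add: fmin_nonneg[OF k])
  define S where "S = y ` {..<k}"
  have Sn: "S \<in> null_sets lborel" unfolding S_def by (intro finite_imp_null_set_lborel) simp
  have Ssets: "S \<in> sets borel" using Sn by (simp add: null_sets_def)
  have "emeasure \<mu> S = (\<integral>\<^sup>+ x. ennreal (\<rho> x) * indicator S x \<partial>lborel)"
    unfolding dens by (rule emeasure_density) (use rho_meas Ssets in auto)
  also have "\<dots> = 0" by (rule nn_integral_null_set[OF Sn])
  finally have "S \<in> null_sets \<mu>" using Ssets dens by (simp add: null_sets_def)
  then have "AE x in \<mu>. x \<notin> S" by (rule AE_not_in)
  with ae have "AE x in \<mu>. False"
  proof eventually_elim
    case (elim x)
    obtain j where "j < k" "fmin k y x = \<bar>x - y j\<bar>" using fmin_attained[OF k] by blast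
    with elim show False unfolding S_def by auto
  qed
  then show False by (simp add: AE_False)
qed

lemma SC_lip:
  assumes k: "k \<ge> 1" and e: "\<And>j. j < k \<Longrightarrow> \<bar>y j - y' j\<bar> \<le> e"
  shows "\<bar>SC n x k y - SC n x k y'\<bar> \<le> e"
proof (cases "n = 0")
  case True
  have "0 \<le> e" using e[of 0] k by linarith
  then show ?thesis using True by (simp add: SC_def)
next
  case False
  have "\<bar>SC n x k y - SC n x k y'\<bar> = (1 / real n) * \<bar>\<Sum>i<n. fmin k y (x i) - fmin k y' (x i)\<bar>"
    unfolding SC_fmin by (simp add: sum_subtractf diff_divide_distrib[symmetric] abs_divide)
  also have "\<dots> \<le> (1 / real n) * (\<Sum>i<n. \<bar>fmin k y (x i) - fmin k y' (x i)\<bar>)"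
    by (intro mult_left_mono sum_abs) simp
  also have "\<dots> \<le> (1 / real n) * (\<Sum>i<n. e)"
  proof (intro mult_left_mono sum_mono)
    fix i show "\<bar>fmin k y (x i) - fmin k y' (x i)\<bar> \<le> e"
      using fmin_lip[OF k e, where z="x i" and z'="x i"] by simp
  qed simp
  also have "\<dots> = e" using False by simp
  finally show ?thesis .
qed

lemma SC_nonneg: "k \<ge> 1 \<Longrightarrow> SC n x k y \<ge> 0"
  unfolding SC_fmin by (intro mult_nonneg_nonneg sum_nonneg fmin_nonneg) auto

definition Dk :: "nat \<Rightarrow> (nat \<Rightarrow> real) set" where
  "Dk k = (\<lambda>l j. if j < k then real_of_rat (l ! j) else 0) ` {l. length l = k}"

lemma countable_Dk: "countable (Dk k)"
  unfolding Dk_def by (intro countable_image countableI_type)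

lemma Dk_sub: "Dk k \<subseteq> {y. \<forall>j\<ge>k. y j = 0}"
  unfolding Dk_def by auto

lemma Dk_ne: "Dk k \<noteq> {}"
  unfolding Dk_def by (auto intro: exI[of _ "replicate k 0"])

lemma rat_approx: "0 < (e::real) \<Longrightarrow> \<exists>r::rat. \<bar>t - real_of_rat r\<bar> < e"
proof -
  assume e: "0 < e"
  obtain q where "q \<in> \<rat>" "t - e < q" "q < t + e" using Rats_dense_in_real[of "t - e" "t + e"] e by auto
  then show ?thesis by (metis Rats_cases abs_diff_less_iff add.commute diff_less_eq less_diff_eq)
qed

lemma SC_opt_countable:
  assumes k: "k \<ge> 1"
  shows "SC_opt n x k = (INF y\<in>Dk k. SC n x k y)"
proof (rule antisym)
  have bdd: "bdd_below ((\<lambda>y. SC n x k y) ` A)" for A using SC_nonneg[OF k] by (intro bdd_belowI[of _ 0]) auto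
  show "SC_opt n x k \<le> (INF y\<in>Dk k. SC n x k y)"
    unfolding SC_opt_def by (rule cINF_superset_mono[OF Dk_ne bdd Dk_sub]) simp
  show "(INF y\<in>Dk k. SC n x k y) \<le> SC_opt n x k"
    unfolding SC_opt_def
  proof (rule cINF_greatest)
    show "{y. \<forall>j\<ge>k. y j = (0::real)} \<noteq> {}" by (auto intro: exI[of _ "\<lambda>_. 0"])
    fix y :: "nat \<Rightarrow> real" assume y: "y \<in> {y. \<forall>j\<ge>k. y j = 0}"
    show "(INF y\<in>Dk k. SC n x k y) \<le> SC n x k y"
    proof (rule field_le_epsilon)
      fix e :: real assume e: "0 < e"
      define r where "r j = (SOME r::rat. \<bar>y j - real_of_rat r\<bar> < e)" for j
      have r: "\<bar>y j - real_of_rat (r j)\<bar> < e" for j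
        unfolding r_def using rat_approx[OF e, of "y j"] by (rule someI_ex)
      define l where "l = map r [0..<k]"
      define q where "q j = (if j < k then real_of_rat (l ! j) else 0)" for j
      have qD: "q \<in> Dk k" unfolding Dk_def q_def l_def by (intro image_eqI[of _ _ "map r [0..<k]"]) auto
      have "\<bar>SC n x k q - SC n x k y\<bar> \<le> e"
      proof (rule SC_lip[OF k])
        fix j assume "j < k"
        then have "q j = real_of_rat (r j)" by (simp add: q_def l_def)
        then show "\<bar>q j - y j\<bar> \<le> e" using r[of j] by (simp add: abs_minus_commute)
      qed
      then have "SC n x k q \<le> SC n x k y + e" by linarith
      then show "(INF y\<in>Dk k. SC n x k y) \<le> SC n x k y + e"
        by (intro cINF_lower2[OF bdd qD])
    qed
  qed
qed

lemma SC_opt_meas: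
  assumes k: "k \<ge> 1" and X[measurable]: "\<And>i. X i \<in> borel_measurable M"
  shows "(\<lambda>\<omega>. SC_opt n (\<lambda>i. X i \<omega>) k) \<in> borel_measurable M"
proof -
  have "(\<lambda>\<omega>. INF y\<in>Dk k. SC n (\<lambda>i. X i \<omega>) k y) \<in> borel_measurable M"
    by (rule borel_measurable_cINF_real[OF countable_Dk]) (simp add: SC_fmin)
  then show ?thesis by (simp add: SC_opt_countable[OF k])
qed

lemma abs_le_sq: "0 < (\<eta>::real) \<Longrightarrow> \<bar>d\<bar> \<le> \<eta> + d\<^sup>2 / \<eta>"
proof -
  assume h: "0 < \<eta>"
  have e1: "0 \<le> (\<bar>d\<bar> - \<eta>)\<^sup>2" by simp
  have e2: "(\<bar>d\<bar> - \<eta>)\<^sup>2 = d\<^sup>2 + \<eta> * \<eta> - 2 * \<eta> * \<bar>d\<bar>"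
    by (simp add: power2_diff power2_eq_square algebra_simps)
  have e3: "0 \<le> \<eta> * \<bar>d\<bar>" using h by simp
  have e4: "2 * (\<eta> * \<bar>d\<bar>) \<le> d\<^sup>2 + \<eta> * \<eta>" using e1 e2 by (simp add: algebra_simps)
  have e5: "\<eta> * \<bar>d\<bar> \<le> \<eta> * \<eta> + d\<^sup>2" using e3 e4 by linarith
  have "\<bar>d\<bar> * \<eta> \<le> \<eta> * \<eta> + d\<^sup>2" using e5 by (simp add: mult.commute)
  then have "\<bar>d\<bar> \<le> (\<eta> * \<eta> + d\<^sup>2) / \<eta>" using h by (simp add: pos_le_divide_eq)
  also have "\<dots> = \<eta> + d\<^sup>2 / \<eta>" using h by (simp add: add_divide_distrib)
  finally show ?thesis .
qed

lemma (in prob_space) avg_L1: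
  fixes X :: "nat \<Rightarrow> 'a \<Rightarrow> real" and h :: "real \<Rightarrow> real"
  assumes indep: "indep_vars (\<lambda>_. borel) X UNIV"
    and Xm[measurable]: "\<And>i. X i \<in> borel_measurable M"
    and hm[measurable]: "h \<in> borel_measurable borel"
    and hb: "\<And>x. \<bar>h x\<bar> \<le> B"
    and h0: "\<And>i. expectation (\<lambda>\<omega>. h (X i \<omega>)) = 0"
    and n: "n \<ge> 1" and eta: "\<eta> > 0"
  shows "expectation (\<lambda>\<omega>. \<bar>(1 / real n) * (\<Sum>i<n. h (X i \<omega>))\<bar>) \<le> \<eta> + B\<^sup>2 / (real n * \<eta>)"
proof -
  define W where "W i \<omega> = h (X i \<omega>)" for i \<omega>
  have Wm[measurable]: "W i \<in> borel_measurable M" for i unfolding W_def by measurable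
  have B0: "B \<ge> 0" using hb[of 0] by linarith
  have Wb: "\<bar>W i \<omega>\<bar> \<le> B" for i \<omega> unfolding W_def by (rule hb)
  have Wi: "integrable M (W i)" for i
    by (rule integrable_const_bound[where B=B]) (auto simp: Wb)
  have WWb: "\<bar>W i \<omega> * W j \<omega>\<bar> \<le> B * B" for i j \<omega>
    unfolding abs_mult by (intro mult_mono Wb) (auto simp: B0)
  have WWi: "integrable M (\<lambda>\<omega>. W i \<omega> * W j \<omega>)" for i j
    by (rule integrable_const_bound[where B="B*B"]) (auto simp: WWb)
  have cross: "expectation (\<lambda>\<omega>. W i \<omega> * W j \<omega>) = 0" if ij: "i \<noteq> j" for i j
  proof -
    have "indep_var borel ((\<lambda>f. h (f i)) \<circ> (\<lambda>\<omega>. restrict (\<lambda>i. X i \<omega>) {i}))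
                    borel ((\<lambda>f. h (f j)) \<circ> (\<lambda>\<omega>. restrict (\<lambda>i. X i \<omega>) {j}))"
      using ij by (intro indep_var_compose[OF indep_var_restrict[OF indep]]) auto
    also have "((\<lambda>f. h (f i)) \<circ> (\<lambda>\<omega>. restrict (\<lambda>i. X i \<omega>) {i})) = W i"
      by (auto simp: W_def fun_eq_iff)
    also have "((\<lambda>f. h (f j)) \<circ> (\<lambda>\<omega>. restrict (\<lambda>i. X i \<omega>) {j})) = W j"
      by (auto simp: W_def fun_eq_iff)
    finally have "indep_var borel (W i) borel (W j)" .
    from indep_var_lebesgue_integral[OF this Wi Wi] show ?thesis
      using h0 by (simp add: W_def)
  qed
  have sq: "expectation (\<lambda>\<omega>. (\<Sum>i<n. W i \<omega>)\<^sup>2) \<le> real n * B\<^sup>2"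
  proof -
    have "expectation (\<lambda>\<omega>. (\<Sum>i<n. W i \<omega>)\<^sup>2) = expectation (\<lambda>\<omega>. \<Sum>i<n. \<Sum>j<n. W i \<omega> * W j \<omega>)"
      by (simp add: power2_eq_square sum_product)
    also have "\<dots> = (\<Sum>i<n. \<Sum>j<n. expectation (\<lambda>\<omega>. W i \<omega> * W j \<omega>))"
      by (simp add: integral_sum WWi)
    also have "\<dots> = (\<Sum>i<n. expectation (\<lambda>\<omega>. W i \<omega> * W i \<omega>))"
    proof (rule sum.cong[OF refl])
      fix i assume i: "i \<in> {..<n}"
      have "(\<Sum>j<n. expectation (\<lambda>\<omega>. W i \<omega> * W j \<omega>)) = (\<Sum>j<n. if j = i then expectation (\<lambda>\<omega>. W i \<omega> * W i \<omega>) else 0)"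
        by (rule sum.cong[OF refl]) (auto simp: cross)
      also have "\<dots> = expectation (\<lambda>\<omega>. W i \<omega> * W i \<omega>)" using i by simp
      finally show "(\<Sum>j<n. expectation (\<lambda>\<omega>. W i \<omega> * W j \<omega>)) = expectation (\<lambda>\<omega>. W i \<omega> * W i \<omega>)" .
    qed
    also have "\<dots> \<le> (\<Sum>i<n. B\<^sup>2)"
    proof (rule sum_mono)
      fix i
      have "expectation (\<lambda>\<omega>. W i \<omega> * W i \<omega>) \<le> expectation (\<lambda>\<omega>. B * B)"
        by (rule integral_mono[OF WWi]) (use WWb in \<open>auto simp: abs_le_iff\<close>)
      then show "expectation (\<lambda>\<omega>. W i \<omega> * W i \<omega>) \<le> B\<^sup>2" by (simp add: power2_eq_square prob_space)
    qed
    also have "\<dots> = real n * B\<^sup>2" by simp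
    finally show ?thesis .
  qed
  define D where "D \<omega> = (1 / real n) * (\<Sum>i<n. W i \<omega>)" for \<omega>
  have Dm[measurable]: "D \<in> borel_measurable M" unfolding D_def by measurable
  have Si: "integrable M (\<lambda>\<omega>. (\<Sum>i<n. W i \<omega>)\<^sup>2)"
    unfolding power2_eq_square sum_product by (simp add: WWi)
  have "expectation (\<lambda>\<omega>. \<bar>D \<omega>\<bar>) \<le> expectation (\<lambda>\<omega>. \<eta> + (D \<omega>)\<^sup>2 / \<eta>)"
  proof (rule integral_mono)
    show "integrable M (\<lambda>\<omega>. \<bar>D \<omega>\<bar>)"
      unfolding D_def by (intro integrable_abs integrable_mult_right) (simp add: Wi)
    show "integrable M (\<lambda>\<omega>. \<eta> + (D \<omega>)\<^sup>2 / \<eta>)"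
      unfolding D_def power_mult_distrib using Si by simp
    show "\<bar>D \<omega>\<bar> \<le> \<eta> + (D \<omega>)\<^sup>2 / \<eta>" for \<omega> by (rule abs_le_sq[OF eta])
  qed
  also have "expectation (\<lambda>\<omega>. \<eta> + (D \<omega>)\<^sup>2 / \<eta>) = \<eta> + expectation (\<lambda>\<omega>. (\<Sum>i<n. W i \<omega>)\<^sup>2) / (real n ^ 2 * \<eta>)"
    unfolding D_def power_mult_distrib using Si
    by (simp add: integral_add prob_space integrable_divide power_divide)
  also have "\<dots> \<le> \<eta> + (real n * B\<^sup>2) / (real n ^ 2 * \<eta>)"
    using sq eta n by (intro add_left_mono divide_right_mono) auto
  also have "(real n * B\<^sup>2) / (real n ^ 2 * \<eta>) = B\<^sup>2 / (real n * \<eta>)"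
    using n by (simp add: power2_eq_square)
  finally show ?thesis unfolding D_def W_def .
qed

lemma clamp_id: "\<bar>x\<bar> \<le> R \<Longrightarrow> clamp R x = x"
proof -
  assume "\<bar>x\<bar> \<le> R"
  then have "- R \<le> x" "x \<le> R" by linarith+
  then show ?thesis by (simp add: clamp_def min_absorb2 max_absorb2)
qed

lemma clamp_dist: "0 \<le> R \<Longrightarrow> \<bar>x - clamp R x\<bar> \<le> \<bar>x\<bar>"
  unfolding clamp_def by (auto simp: abs_if max_def min_def)

lemma grid:
  fixes R \<delta> :: real and k :: nat
  assumes R: "R > 0" and d: "\<delta> > 0"
  shows "\<exists>G. finite G \<and> (\<forall>g\<in>G. \<forall>j<k. \<bar>g j\<bar> \<le> R) \<and> (\<forall>y. \<exists>g\<in>G. \<forall>j<k. \<bar>clamp R (y j) - g j\<bar> \<le> \<delta>)"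
proof -
  define N where "N = nat \<lfloor>2 * R / \<delta>\<rfloor>"
  define P where "P = (\<lambda>i. - R + \<delta> * real i) ` {0..N}"
  define rnd where "rnd t = - R + \<delta> * real (nat \<lfloor>(clamp R t + R) / \<delta>\<rfloor>)" for t
  have rnd: "rnd t \<in> P \<and> \<bar>clamp R t - rnd t\<bar> \<le> \<delta>" for t
  proof -
    define c where "c = clamp R t"
    have cb: "\<bar>c\<bar> \<le> R" unfolding c_def using clamp_bound R by simp
    define u where "u = (c + R) / \<delta>"
    have u0: "0 \<le> u" unfolding u_def using cb d by auto
    have fl0: "0 \<le> \<lfloor>u\<rfloor>" using u0 by simp
    have rn: "real (nat \<lfloor>u\<rfloor>) = of_int \<lfloor>u\<rfloor>" using fl0 by simp
    have f1: "of_int \<lfloor>u\<rfloor> \<le> u" by (rule of_int_floor_le)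
    have f2: "u < of_int \<lfloor>u\<rfloor> + 1" by (rule real_of_int_floor_add_one_gt)
    have "\<delta> * of_int \<lfloor>u\<rfloor> \<le> c + R" using pos_le_divide_eq[OF d] f1 unfolding u_def by (metis mult.commute)
    moreover have "c + R < \<delta> * of_int \<lfloor>u\<rfloor> + \<delta>" using f2 d unfolding u_def by (simp add: pos_divide_less_eq algebra_simps)
    moreover have "rnd t = - R + \<delta> * of_int \<lfloor>u\<rfloor>" unfolding rnd_def u_def c_def using rn u_def c_def by simp
    ultimately have A: "\<bar>c - rnd t\<bar> \<le> \<delta>" by linarith
    have "u \<le> 2 * R / \<delta>" unfolding u_def using cb d by (intro divide_right_mono) auto
    then have "\<lfloor>u\<rfloor> \<le> \<lfloor>2 * R / \<delta>\<rfloor>" by (rule floor_mono)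
    then have "nat \<lfloor>u\<rfloor> \<le> N" unfolding N_def by simp
    then have "rnd t \<in> P" unfolding P_def rnd_def u_def c_def by auto
    with A show ?thesis unfolding c_def by simp
  qed
  have PR: "\<bar>p\<bar> \<le> R" if pP: "p \<in> P" for p
  proof -
    obtain i where i0: "p = - R + \<delta> * real i" "i \<in> {0..N}" using pP unfolding P_def by (rule imageE)
    then have i: "i \<le> N" "p = - R + \<delta> * real i" by auto
    have "real N \<le> 2 * R / \<delta>" unfolding N_def using R d by simp
    then have "real i \<le> 2 * R / \<delta>" using i(1) by linarith
    then have "\<delta> * real i \<le> 2 * R" using d by (simp add: pos_le_divide_eq mult.commute)
    moreover have "0 \<le> \<delta> * real i" using d by simp
    ultimately show ?thesis using i(2) by linarith
  qed
  define G where "G = (\<lambda>h j. if j < k then h j else 0) ` (PiE {..<k} (\<lambda>_. P))"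
  have "finite G" unfolding G_def P_def by (intro finite_imageI finite_PiE) auto
  moreover have "\<forall>g\<in>G. \<forall>j<k. \<bar>g j\<bar> \<le> R"
    unfolding G_def using PR by (auto simp: PiE_def)
  moreover have "\<forall>y. \<exists>g\<in>G. \<forall>j<k. \<bar>clamp R (y j) - g j\<bar> \<le> \<delta>"
  proof
    fix y :: "nat \<Rightarrow> real"
    define g where "g j = (if j < k then restrict (\<lambda>j. rnd (y j)) {..<k} j else 0)" for j
    have "restrict (\<lambda>j. rnd (y j)) {..<k} \<in> PiE {..<k} (\<lambda>_. P)" using rnd by auto
    then have "g \<in> G" unfolding G_def g_def by (intro image_eqI[OF _ \<open>restrict _ _ \<in> _\<close>]) auto
    moreover have "\<forall>j<k. \<bar>clamp R (y j) - g j\<bar> \<le> \<delta>" using rnd unfolding g_def by auto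
    ultimately show "\<exists>g\<in>G. \<forall>j<k. \<bar>clamp R (y j) - g j\<bar> \<le> \<delta>" by blast
  qed
  ultimately show ?thesis by blast
qed

lemma clamp_tail:
  assumes sets: "sets \<mu> = sets borel" and mom: "integrable \<mu> (\<lambda>x. x)" and e: "e > 0"
  shows "\<exists>R\<ge>1. (\<integral>x. \<bar>x - clamp R x\<bar> \<partial>\<mu>) < e"
proof -
  define s where "s m x = \<bar>x - clamp (real m) x\<bar>" for m x
  have ms: "s m \<in> borel_measurable \<mu>" for m
    unfolding s_def by (subst measurable_cong_sets[OF sets refl]) measurable
  have "(\<lambda>m. \<integral>x. s m x \<partial>\<mu>) \<longlonglongrightarrow> (\<integral>x. 0 \<partial>\<mu>)"
  proof (rule integral_dominated_convergence[where w="\<lambda>x. \<bar>x\<bar>"])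
    show "(\<lambda>x. 0::real) \<in> borel_measurable \<mu>" by simp
    show "s m \<in> borel_measurable \<mu>" for m by (rule ms)
    show "integrable \<mu> (\<lambda>x. \<bar>x\<bar>)" using mom by (rule integrable_abs)
    show "AE x in \<mu>. (\<lambda>m. s m x) \<longlonglongrightarrow> 0"
    proof (rule AE_I2)
      fix x
      have "eventually (\<lambda>m. s m x = 0) sequentially"
      proof (rule eventually_sequentiallyI[of "nat \<lceil>\<bar>x\<bar>\<rceil>"])
        fix m assume "nat \<lceil>\<bar>x\<bar>\<rceil> \<le> m"
        then have "\<bar>x\<bar> \<le> real m" by linarith
        then show "s m x = 0" unfolding s_def by (simp add: clamp_id)
      qed
      then show "(\<lambda>m. s m x) \<longlonglongrightarrow> 0" by (rule tendsto_eventually)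
    qed
    show "AE x in \<mu>. norm (s m x) \<le> \<bar>x\<bar>" for m
      unfolding s_def using clamp_dist[of "real m"] by simp
  qed
  then have "(\<lambda>m. \<integral>x. s m x \<partial>\<mu>) \<longlonglongrightarrow> 0" by simp
  then have "eventually (\<lambda>m. (\<integral>x. s m x \<partial>\<mu>) < e) sequentially" using e by (rule order_tendstoD)
  moreover have "eventually (\<lambda>m. (1::nat) \<le> m) sequentially" by (rule eventually_ge_at_top)
  ultimately have "eventually (\<lambda>m. (\<integral>x. s m x \<partial>\<mu>) < e \<and> 1 \<le> m) sequentially"
    by (rule eventually_conj)
  then obtain m where "1 \<le> m" "(\<integral>x. s m x \<partial>\<mu>) < e" using eventually_sequentially by auto
  then show ?thesis unfolding s_def by (intro exI[of _ "real m"]) auto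
qed

lemma S_bounds:
  assumes k: "k \<ge> 1" and y: "\<forall>j\<ge>k. y j = 0"
  shows "0 \<le> SC_opt n x k" "SC_opt n x k \<le> SC n x k y"
proof -
  show "0 \<le> SC_opt n x k" unfolding SC_opt_def
    by (rule cINF_greatest) (auto intro: exI[of _ "\<lambda>_. 0"] SC_nonneg[OF k])
  show "SC_opt n x k \<le> SC n x k y" unfolding SC_opt_def
    by (rule cINF_lower) (use SC_nonneg[OF k] y in \<open>auto intro!: bdd_belowI[of _ 0]\<close>)
qed

lemma (in prob_space) conv:
  fixes X :: "nat \<Rightarrow> 'a \<Rightarrow> real" and \<mu> :: "real measure"
  assumes pmu: "prob_space \<mu>" and sets_mu: "sets \<mu> = sets borel" and mom: "integrable \<mu> (\<lambda>x. x)"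
    and k: "k \<ge> 1" and Xm[measurable]: "\<And>i. X i \<in> borel_measurable M"
    and indep: "indep_vars (\<lambda>_. borel) X UNIV" and law: "\<And>i. distr M borel (X i) = \<mu>"
    and VF: "\<And>y. V \<le> (\<integral>x. fmin k y x \<partial>\<mu>)"
    and y0: "\<forall>j\<ge>k. y0 j = 0" and V: "V = (\<integral>x. fmin k y0 x \<partial>\<mu>)"
  shows "(\<lambda>n. expectation (\<lambda>\<omega>. SC_opt n (\<lambda>i. X i \<omega>) k)) \<longlonglongrightarrow> V"
proof -
  interpret Pm: prob_space \<mu> by fact
  have mu_meas: "f \<in> borel_measurable \<mu>" if "f \<in> borel_measurable borel" for f
    using that by (subst measurable_cong_sets[OF sets_mu refl])
  have intf: "integrable \<mu> (\<lambda>x. fmin k y x)" for y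
  proof (rule Bochner_Integration.integrable_bound[where f="\<lambda>x. \<bar>x\<bar> + \<bar>y 0\<bar>"])
    show "integrable \<mu> (\<lambda>x. \<bar>x\<bar> + \<bar>y 0\<bar>)"
      using mom by (intro Bochner_Integration.integrable_add integrable_abs Pm.integrable_const)
    show "(\<lambda>x. fmin k y x) \<in> borel_measurable \<mu>" by (rule mu_meas) measurable
    show "AE x in \<mu>. norm (fmin k y x) \<le> norm (\<bar>x\<bar> + \<bar>y 0\<bar>)"
      using fmin_le_abs[OF k] fmin_nonneg[OF k] by (intro AE_I2) auto
  qed
  have Xint: "integrable M (\<lambda>\<omega>. g (X i \<omega>))" if "integrable \<mu> g" "g \<in> borel_measurable borel" for g :: "real \<Rightarrow> real" and i
    using integrable_distr_eq[of "X i" M borel g] that law by simp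
  have Xexp: "expectation (\<lambda>\<omega>. g (X i \<omega>)) = (\<integral>x. g x \<partial>\<mu>)" if "g \<in> borel_measurable borel" for g :: "real \<Rightarrow> real" and i
    using integral_distr[OF Xm that] law by simp
  have Xf: "integrable M (\<lambda>\<omega>. fmin k y (X i \<omega>))" for y i
    by (rule Xint[OF intf]) measurable
  define S where "S n \<omega> = SC_opt n (\<lambda>i. X i \<omega>) k" for n \<omega>
  have SCint: "integrable M (\<lambda>\<omega>. SC n (\<lambda>i. X i \<omega>) k y)" for n y
    unfolding SC_fmin by (intro integrable_mult_right) (simp add: Xf)
  have Sint: "integrable M (S n)" for n
  proof (rule Bochner_Integration.integrable_bound[OF SCint[of n "\<lambda>_. 0"]])
    show "S n \<in> borel_measurable M" unfolding S_def by (rule SC_opt_meas[OF k Xm])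
    show "AE \<omega> in M. norm (S n \<omega>) \<le> norm (SC n (\<lambda>i. X i \<omega>) k (\<lambda>_. 0))"
      using S_bounds[OF k, of "\<lambda>_. 0"] SC_nonneg[OF k] by (intro AE_I2) (simp add: S_def)
  qed
  have upper: "expectation (S n) \<le> V" if n: "n \<ge> 1" for n
  proof -
    have "expectation (S n) \<le> expectation (\<lambda>\<omega>. SC n (\<lambda>i. X i \<omega>) k y0)"
      by (rule integral_mono[OF Sint SCint]) (simp add: S_def S_bounds[OF k y0])
    also have "\<dots> = (1 / real n) * (\<Sum>i<n. expectation (\<lambda>\<omega>. fmin k y0 (X i \<omega>)))"
      unfolding SC_fmin by (simp add: integral_sum Xint intf)
    also have "\<dots> = (1 / real n) * (\<Sum>i<n. V)" by (simp add: Xexp V)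
    also have "\<dots> = V" using n by simp
    finally show ?thesis .
  qed
  have lower: "eventually (\<lambda>n. V - e \<le> expectation (S n)) sequentially" if e: "e > 0" for e
  proof -
    obtain R where R: "R \<ge> 1" "(\<integral>x. \<bar>x - clamp R x\<bar> \<partial>\<mu>) < e / 3"
      using clamp_tail[OF sets_mu mom, of "e / 3"] e by auto
    define Ed where "Ed = (\<integral>x. \<bar>x - clamp R x\<bar> \<partial>\<mu>)"
    define \<delta> where "\<delta> = e / 3"
    have d0: "\<delta> > 0" using e by (simp add: \<delta>_def)
    obtain G where G: "finite G" "\<forall>g\<in>G. \<forall>j<k. \<bar>g j\<bar> \<le> R"
        "\<forall>y. \<exists>g\<in>G. \<forall>j<k. \<bar>clamp R (y j) - g j\<bar> \<le> \<delta>"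
      using grid[of R \<delta> k] R d0 by auto
    define H where "H g = (\<integral>x. fmin k g (clamp R x) \<partial>\<mu>)" for g
    have intc: "integrable \<mu> (\<lambda>x. fmin k g (clamp R x))" for g
    proof (rule Pm.integrable_const_bound[where B="R + \<bar>g 0\<bar>"])
      show "AE x in \<mu>. norm (fmin k g (clamp R x)) \<le> R + \<bar>g 0\<bar>"
      proof (rule AE_I2)
        fix x
        have "fmin k g (clamp R x) \<le> \<bar>clamp R x\<bar> + \<bar>g 0\<bar>" by (rule fmin_le_abs[OF k])
        moreover have "\<bar>clamp R x\<bar> \<le> R" using R by (intro clamp_bound) simp
        ultimately show "norm (fmin k g (clamp R x)) \<le> R + \<bar>g 0\<bar>" using fmin_nonneg[OF k] by simp
      qed
      show "(\<lambda>x. fmin k g (clamp R x)) \<in> borel_measurable \<mu>" by (rule mu_meas) measurable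
    qed
    have intd: "integrable \<mu> (\<lambda>x. \<bar>x - clamp R x\<bar>)"
    proof (rule Bochner_Integration.integrable_bound[where f="\<lambda>x. \<bar>x\<bar>"])
      show "integrable \<mu> (\<lambda>x. \<bar>x\<bar>)" using mom by (rule integrable_abs)
      show "(\<lambda>x. \<bar>x - clamp R x\<bar>) \<in> borel_measurable \<mu>" by (rule mu_meas) measurable
      show "AE x in \<mu>. norm \<bar>x - clamp R x\<bar> \<le> norm \<bar>x\<bar>"
        using clamp_dist[of R] R by (intro AE_I2) simp
    qed
    have HV: "V - Ed \<le> H g" for g
    proof -
      have "(\<integral>x. fmin k g x \<partial>\<mu>) \<le> (\<integral>x. fmin k g (clamp R x) + \<bar>x - clamp R x\<bar> \<partial>\<mu>)"
      proof (rule integral_mono[OF intf Bochner_Integration.integrable_add[OF intc intd]])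
        fix x
        have "\<bar>fmin k g x - fmin k g (clamp R x)\<bar> \<le> \<bar>x - clamp R x\<bar> + 0"
          by (rule fmin_lip[OF k]) simp
        then show "fmin k g x \<le> fmin k g (clamp R x) + \<bar>x - clamp R x\<bar>" by linarith
      qed
      also have "\<dots> = H g + Ed" unfolding H_def Ed_def by (rule Bochner_Integration.integral_add[OF intc intd])
      finally show ?thesis using VF[of g] by linarith
    qed
    define B where "B = 2 * R"
    have fcb: "0 \<le> fmin k g (clamp R x) \<and> fmin k g (clamp R x) \<le> B" if g: "g \<in> G" for g x
    proof -
      have "fmin k g (clamp R x) \<le> \<bar>clamp R x\<bar> + \<bar>g 0\<bar>" by (rule fmin_le_abs[OF k])
      moreover have "\<bar>clamp R x\<bar> \<le> R" using R by (intro clamp_bound) simp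
      moreover have "\<bar>g 0\<bar> \<le> R" using G(2) g k by auto
      ultimately show ?thesis using fmin_nonneg[OF k] by (simp add: B_def)
    qed
    have Hb: "0 \<le> H g \<and> H g \<le> B" if g: "g \<in> G" for g
    proof
      show "0 \<le> H g" unfolding H_def by (intro integral_nonneg_AE AE_I2) (simp add: fcb[OF g])
      have "H g \<le> (\<integral>x. B \<partial>\<mu>)" unfolding H_def
        by (rule integral_mono[OF intc Pm.integrable_const]) (simp add: fcb[OF g])
      also have "\<dots> = B" by (simp add: Pm.prob_space)
      finally show "H g \<le> B" .
    qed
    define h where "h g x = fmin k g (clamp R x) - H g" for g x
    have hm[measurable]: "h g \<in> borel_measurable borel" for g unfolding h_def by measurable
    have hb: "\<bar>h g x\<bar> \<le> B" if "g \<in> G" for g x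
      using fcb[OF that, of x] Hb[OF that] unfolding h_def by linarith
    have hint: "integrable \<mu> (h g)" for g
      unfolding h_def by (rule Bochner_Integration.integrable_diff[OF intc Pm.integrable_const])
    have h0: "expectation (\<lambda>\<omega>. h g (X i \<omega>)) = 0" for g i
    proof -
      have "expectation (\<lambda>\<omega>. h g (X i \<omega>)) = (\<integral>x. h g x \<partial>\<mu>)" by (rule Xexp) simp
      also have "\<dots> = H g - (\<integral>x. H g \<partial>\<mu>)" unfolding h_def H_def
        by (rule Bochner_Integration.integral_diff[OF intc Pm.integrable_const])
      also have "\<dots> = 0" by (simp add: Pm.prob_space)
      finally show ?thesis .
    qed
    define Dg where "Dg g n \<omega> = (1 / real n) * (\<Sum>i<n. h g (X i \<omega>))" for g n \<omega>
    have Dint: "integrable M (\<lambda>\<omega>. \<bar>Dg g n \<omega>\<bar>)" for g n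
      unfolding Dg_def by (intro integrable_abs integrable_mult_right) (simp add: Xint hint)
    have L1: "expectation (\<lambda>\<omega>. \<bar>Dg g n \<omega>\<bar>) \<le> \<eta> + B\<^sup>2 / (real n * \<eta>)"
      if g: "g \<in> G" and n: "n \<ge> 1" and eta: "\<eta> > 0" for g n \<eta>
      unfolding Dg_def by (rule avg_L1[OF indep Xm hm hb[OF g] h0 n eta])
    have pw: "V - Ed - \<delta> - (\<Sum>g\<in>G. \<bar>Dg g n \<omega>\<bar>) \<le> S n \<omega>" if n: "n \<ge> 1" for n \<omega>
    proof -
      have "V - Ed - \<delta> - (\<Sum>g\<in>G. \<bar>Dg g n \<omega>\<bar>) \<le> SC n (\<lambda>i. X i \<omega>) k y" for y
      proof -
        obtain g where g: "g \<in> G" "\<forall>j<k. \<bar>clamp R (y j) - g j\<bar> \<le> \<delta>" using G(3) by blast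
        have t: "fmin k g (clamp R (X i \<omega>)) - \<delta> \<le> fmin k y (X i \<omega>)" for i
        proof -
          have "fmin k (\<lambda>j. clamp R (y j)) (clamp R (X i \<omega>)) \<le> fmin k y (X i \<omega>)"
          proof (rule fmin_mono_pt[OF k])
            fix j show "\<bar>clamp R (X i \<omega>) - clamp R (y j)\<bar> \<le> \<bar>X i \<omega> - y j\<bar>"
              by (rule clamp_lip) (use R in simp)
          qed
          moreover have "\<bar>fmin k (\<lambda>j. clamp R (y j)) (clamp R (X i \<omega>)) - fmin k g (clamp R (X i \<omega>))\<bar> \<le> \<bar>clamp R (X i \<omega>) - clamp R (X i \<omega>)\<bar> + \<delta>"
            by (rule fmin_lip[OF k]) (use g(2) in simp)
          ultimately show ?thesis by simp
        qed
        have "(1 / real n) * (\<Sum>i<n. fmin k g (clamp R (X i \<omega>)) - \<delta>) \<le> (1 / real n) * (\<Sum>i<n. fmin k y (X i \<omega>))"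
          by (intro mult_left_mono sum_mono t) simp
        also have "\<dots> = SC n (\<lambda>i. X i \<omega>) k y" by (rule SC_fmin[symmetric])
        also have "(1 / real n) * (\<Sum>i<n. fmin k g (clamp R (X i \<omega>)) - \<delta>) = Dg g n \<omega> + H g - \<delta>"
          using n unfolding Dg_def h_def by (simp add: sum_subtractf field_simps)
        finally have A: "Dg g n \<omega> + H g - \<delta> \<le> SC n (\<lambda>i. X i \<omega>) k y" .
        have "\<bar>Dg g n \<omega>\<bar> \<le> (\<Sum>g\<in>G. \<bar>Dg g n \<omega>\<bar>)" by (rule member_le_sum[OF g(1)]) (simp_all add: G(1))
        then show ?thesis using A HV[of g] by linarith
      qed
      then show ?thesis unfolding S_def SC_opt_def by (intro cINF_greatest) (auto intro: exI[of _ "\<lambda>_. 0"])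
    qed
    define \<eta> where "\<eta> = \<delta> / (2 * (real (card G) + 1))"
    have eta0: "\<eta> > 0" using d0 by (simp add: \<eta>_def)
    have cge: "real (card G) * \<eta> \<le> \<delta> / 2"
    proof -
      have "real (card G) * \<eta> = (\<delta> / 2) * (real (card G) / (real (card G) + 1))"
        by (simp add: \<eta>_def field_simps)
      also have "\<dots> \<le> (\<delta> / 2) * 1" using d0 by (intro mult_left_mono) auto
      finally show ?thesis by simp
    qed
    define C where "C = 2 * real (card G) * B\<^sup>2 / (\<delta> * \<eta>)"
    have "eventually (\<lambda>n. C \<le> real n \<and> 1 \<le> n) sequentially"
    proof (rule eventually_sequentiallyI[of "nat \<lceil>C\<rceil> + 1"])
      fix n assume "nat \<lceil>C\<rceil> + 1 \<le> n"
      then show "C \<le> real n \<and> 1 \<le> n" by linarith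
    qed
    then show ?thesis
    proof (rule eventually_mono)
      fix n assume nC: "C \<le> real n \<and> 1 \<le> n"
      then have n: "n \<ge> 1" and nC': "C \<le> real n" by auto
      have npos: "real n > 0" using n by simp
      have tail: "real (card G) * (B\<^sup>2 / (real n * \<eta>)) \<le> \<delta> / 2"
      proof -
        have "2 * real (card G) * B\<^sup>2 \<le> real n * (\<delta> * \<eta>)"
          using nC' d0 eta0 unfolding C_def by (simp add: pos_divide_le_eq mult.commute)
        then have "real (card G) * B\<^sup>2 / (real n * \<eta>) \<le> \<delta> / 2"
          using npos eta0 by (simp add: pos_divide_le_eq field_simps)
        then show ?thesis by simp
      qed
      have "V - Ed - \<delta> - (\<Sum>g\<in>G. expectation (\<lambda>\<omega>. \<bar>Dg g n \<omega>\<bar>)) = expectation (\<lambda>\<omega>. V - Ed - \<delta> - (\<Sum>g\<in>G. \<bar>Dg g n \<omega>\<bar>))"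
        by (simp add: Bochner_Integration.integral_diff integral_sum Dint prob_space)
      also have "\<dots> \<le> expectation (S n)"
        by (rule integral_mono[OF _ Sint pw[OF n]]) (simp add: Dint)
      finally have E1: "V - Ed - \<delta> - (\<Sum>g\<in>G. expectation (\<lambda>\<omega>. \<bar>Dg g n \<omega>\<bar>)) \<le> expectation (S n)" .
      have "(\<Sum>g\<in>G. expectation (\<lambda>\<omega>. \<bar>Dg g n \<omega>\<bar>)) \<le> (\<Sum>g\<in>G. \<eta> + B\<^sup>2 / (real n * \<eta>))"
        by (intro sum_mono L1 n eta0)
      also have "\<dots> = real (card G) * \<eta> + real (card G) * (B\<^sup>2 / (real n * \<eta>))"
        by (simp add: distrib_left)
      also have "\<dots> \<le> \<delta>" using cge tail by linarith
      finally have E2: "(\<Sum>g\<in>G. expectation (\<lambda>\<omega>. \<bar>Dg g n \<omega>\<bar>)) \<le> \<delta>" .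
      have "Ed < \<delta>" using R(2) unfolding Ed_def \<delta>_def .
      then show "V - e \<le> expectation (S n)" using E1 E2 unfolding \<delta>_def by linarith
    qed
  qed
  show ?thesis unfolding S_def[symmetric]
  proof (rule order_tendstoI)
    fix a assume "a < V"
    then have "eventually (\<lambda>n. V - (V - a) / 2 \<le> expectation (S n)) sequentially"
      by (intro lower) simp
    then show "eventually (\<lambda>n. a < expectation (S n)) sequentially"
    proof (rule eventually_mono)
      fix n assume "V - (V - a) / 2 \<le> expectation (S n)"
      have ha: "a < V - (V - a) / 2" using \<open>a < V\<close> by (simp add: field_simps)
      show "a < expectation (S n)" by (rule less_le_trans[OF ha]) fact
    qed
  next
    fix a assume "V < a"
    have "eventually (\<lambda>n. (1::nat) \<le> n) sequentially" by (rule eventually_ge_at_top)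
    then show "eventually (\<lambda>n. expectation (S n) < a) sequentially"
      by (rule eventually_mono) (use upper \<open>V < a\<close> in force)
  qed
qed

lemma intf_lemma:
  assumes prob: "prob_space \<mu>" and sets_mu: "sets \<mu> = sets borel" and mom: "integrable \<mu> (\<lambda>x. x)"
    and k: "k \<ge> 1"
  shows "integrable \<mu> (\<lambda>x. fmin k y x)"
proof -
  interpret Pm: prob_space \<mu> by fact
  show ?thesis
  proof (rule Bochner_Integration.integrable_bound[where f="\<lambda>x. \<bar>x\<bar> + \<bar>y 0\<bar>"])
    show "integrable \<mu> (\<lambda>x. \<bar>x\<bar> + \<bar>y 0\<bar>)"
      using mom by (intro Bochner_Integration.integrable_add integrable_abs Pm.integrable_const)
    show "(\<lambda>x. fmin k y x) \<in> borel_measurable \<mu>"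
      by (subst measurable_cong_sets[OF sets_mu refl]) measurable
    show "AE x in \<mu>. norm (fmin k y x) \<le> norm (\<bar>x\<bar> + \<bar>y 0\<bar>)"
      using fmin_le_abs[OF k] fmin_nonneg[OF k] by (intro AE_I2) auto
  qed
qed

theorem lemma1:
  fixes \<mu> :: "real measure" and \<rho> :: "real \<Rightarrow> real" and I :: "real set"
    and M :: "'a measure" and X :: "nat \<Rightarrow> 'a \<Rightarrow> real" and k :: nat
  assumes prob: "prob_space \<mu>"
    and dens: "\<mu> = density lborel (\<lambda>x. ennreal (\<rho> x))"
    and rho_meas: "\<rho> \<in> borel_measurable borel"
    and rho_nonneg: "\<And>x. \<rho> x \<ge> 0"
    and supp_interval: "is_interval I"
    and supp_out: "\<And>x. x \<notin> I \<Longrightarrow> \<rho> x = 0"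
    and supp_pos: "\<And>x. x \<in> interior I \<Longrightarrow> \<rho> x > 0"
    and rho_diff: "\<rho> differentiable_on I"
    and moment: "integrable \<mu> (\<lambda>x. x)"
    and M: "prob_space M"
    and X_meas: "\<And>i. X i \<in> borel_measurable M"
    and X_indep: "prob_space.indep_vars M (\<lambda>_. borel) X UNIV"
    and X_law: "\<And>i. distr M borel (X i) = \<mu>"
    and k: "k \<ge> 1"
  shows "(\<exists>\<nu> \<in> Pk k. W1 \<mu> \<nu> = (INF m \<in> Pk k. W1 \<mu> m))
    \<and> (\<forall>\<nu> \<in> Pk k. W1 \<mu> \<nu> = (INF m \<in> Pk k. W1 \<mu> m) \<longrightarrow>
         W1 \<mu> \<nu> < \<infinity> \<and>
         ((\<lambda>n. integral\<^sup>L M (\<lambda>\<omega>. SC_opt n (\<lambda>i. X i \<omega>) k))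
            \<longlonglongrightarrow> enn2real (W1 \<mu> \<nu>)))
    \<and> (\<forall>\<^sub>F n in sequentially. integral\<^sup>L M (\<lambda>\<omega>. SC_opt n (\<lambda>i. X i \<omega>) k) > 0)"
proof -
  interpret PM: prob_space M by (rule M)
  have sets_mu: "sets \<mu> = sets borel" using dens by simp
  have intf: "integrable \<mu> (\<lambda>x. fmin k y x)" for y by (rule intf_lemma[OF prob sets_mu moment k])
  obtain ys where ys: "\<forall>y'. (\<integral>x. fmin k ys x \<partial>\<mu>) \<le> (\<integral>x. fmin k y' x \<partial>\<mu>)"
    using minimizer[OF prob sets_mu k intf] by blast
  define y0 where "y0 j = (if j < k then ys j else 0)" for j
  define V where "V = (\<integral>x. fmin k y0 x \<partial>\<mu>)"
  have fy0: "fmin k y0 = fmin k ys" by (rule ext, rule fmin_cong) (simp add: y0_def)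
  have VF: "V \<le> (\<integral>x. fmin k y x \<partial>\<mu>)" for y using ys fy0 unfolding V_def by simp
  have y0Y: "\<forall>j\<ge>k. y0 j = 0" by (simp add: y0_def)
  have Vpos: "V > 0" unfolding V_def by (rule F_pos[OF prob dens rho_meas k intf])
  have lowW: "ennreal V \<le> W1 \<mu> \<nu>" if nu: "\<nu> \<in> Pk k" for \<nu>
  proof -
    obtain p where p: "ennreal (\<integral>x. fmin k p x \<partial>\<mu>) \<le> W1 \<mu> \<nu>"
      using W1_lower[OF sets_mu k intf nu] by blast
    have "ennreal V \<le> ennreal (\<integral>x. fmin k p x \<partial>\<mu>)" using VF[of p] by (rule ennreal_leI)
    then show ?thesis using p by (rule order_trans)
  qed
  obtain \<nu>0 where nu0: "\<nu>0 \<in> Pk k" "W1 \<mu> \<nu>0 \<le> ennreal V"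
    using W1_upper[OF prob sets_mu k intf[of y0]] unfolding V_def by blast
  have W0: "W1 \<mu> \<nu>0 = ennreal V" using nu0 lowW[OF nu0(1)] by (rule_tac antisym) auto
  have INFeq: "(INF m\<in>Pk k. W1 \<mu> m) = ennreal V"
  proof (rule antisym)
    show "(INF m\<in>Pk k. W1 \<mu> m) \<le> ennreal V" using nu0 by (rule_tac INF_lower2) auto
    show "ennreal V \<le> (INF m\<in>Pk k. W1 \<mu> m)" by (rule INF_greatest) (rule lowW)
  qed
  have conv: "(\<lambda>n. integral\<^sup>L M (\<lambda>\<omega>. SC_opt n (\<lambda>i. X i \<omega>) k)) \<longlonglongrightarrow> V"
    by (rule PM.conv[OF prob sets_mu moment k X_meas X_indep X_law VF y0Y V_def])
  have V0: "V \<ge> 0" using Vpos by simp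
  show ?thesis
  proof (intro conjI)
    show "\<exists>\<nu>\<in>Pk k. W1 \<mu> \<nu> = (INF m\<in>Pk k. W1 \<mu> m)" by (rule bexI[OF _ nu0(1)]) (simp add: W0 INFeq)
    show "\<forall>\<nu>\<in>Pk k. W1 \<mu> \<nu> = (INF m\<in>Pk k. W1 \<mu> m) \<longrightarrow> W1 \<mu> \<nu> < \<infinity> \<and>
         ((\<lambda>n. integral\<^sup>L M (\<lambda>\<omega>. SC_opt n (\<lambda>i. X i \<omega>) k)) \<longlonglongrightarrow> enn2real (W1 \<mu> \<nu>))"
      using conv V0 by (simp add: INFeq)
    show "\<forall>\<^sub>F n in sequentially. integral\<^sup>L M (\<lambda>\<omega>. SC_opt n (\<lambda>i. X i \<omega>) k) > 0"
      using order_tendstoD(1)[OF conv Vpos] .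
  qed
qed

end
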